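(* Let $A$, $c$, $B$ be as in the context, let $b\in\mathbb NA$, let $u\in\mathbb N^n$ with $Au=b$, and let $\tau\subseteq\{1,\dots,n\}$ be arbitrary. The group relaxation $G^\tau(b)$, i.e. the program $$\min\{(-cB)\cdot z : B^{\bar\tau}z\le\pi_\tau(u),\ z\in\mathbb Z^{n-d}\},$$ has a finite optimal solution if and only if $\tau$ is a face of $\Delta_c$.
   Context: $A\in\mathbb Z^{d\times n}$ has rank $d$, columns $a_1,\dots,a_n$, $cone(A)$ is pointed, $\{x\in\mathbb R^n_{\ge0}:Ax=0\}=\{0\}$, $\mathbb ZA=\mathbb Z^d$, and $\mathbb NA=\{Au:u\in\mathbb N^n\}$. The regular subdivision $\Delta_c$ of $cone(A)$ with respect to $c\in\mathbb Z^n$ is the collection of index sets $\sigma\subseteq\{1,\dots,n\}$ such that there exists $y\in\mathbb R^d$ with $y\cdot a_j=c_j$ for $j\in\sigma$ and $y\cdot a_j<c_j$ for $j\notin\sigma$; $c$ is assumed generic, meaning $\Delta_c$ is a triangulation of $cone(A)$. $B\in\mathbb Z^{n\times(n-d)}$ is a matrix whose columns form a basis of the lattice $\{x\in\mathbb Z^n:Ax=0\}$. For $\tau\subseteq\{1,\dots,n\}$ with complement $\bar\tau$, $B^{\bar\tau}$ is the submatrix of $B$ obtained by deleting the rows indexed by $\tau$, and $\pi_\tau:\mathbb R^n\to\mathbb R^{|\bar\tau|}$ deletes the coordinates indexed by $\tau$. (For $\tau$ a face of $\Delta_c$ this program is equivalent to Gomory's group relaxation $\min\{\tilde c_{\bar\tau}\cdot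 x_{\bar\tau}: A_\tau x_\tau+A_{\bar\tau}x_{\bar\tau}=b,\ x_{\bar\tau}\ge0,\ x\in\mathbb Z^n\}$, where $\tilde c_{\bar\tau}$ is $c_{\bar\sigma}-c_\sigma A_\sigma^{-1}A_{\bar\sigma}$ extended by zeros for a maximal face $\sigma\supseteq\tau$; for arbitrary $\tau$ the group relaxation is defined by the displayed program.) *)

theory Defs
  imports Complex_Main
begin

text \<open>Conventions: indices are 0-based. A d x n integer matrix is a function
  A :: nat => nat => int, where only entries A i j with i < d, j < n matter.
  Column j of A is a_j = (A 0 j, ..., A (d-1) j). Vectors in R^d / Z^n are
  functions nat => real / nat => int, only the first d / n entries matter.\<close>

definition full_row_rank :: "nat \<Rightarrow> nat \<Rightarrow> (nat \<Rightarrow> nat \<Rightarrow> int) \<Rightarrow> bool" where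
  "full_row_rank d n A \<longleftrightarrow>
     (\<forall>y::nat \<Rightarrow> real. (\<forall>j<n. (\<Sum>i<d. y i * of_int (A i j)) = 0) \<longrightarrow> (\<forall>i<d. y i = 0))"

definition cone_of :: "nat \<Rightarrow> (nat \<Rightarrow> nat \<Rightarrow> int) \<Rightarrow> nat set \<Rightarrow> (nat \<Rightarrow> real) set" where
  "cone_of d A S = {v. (\<forall>i\<ge>d. v i = 0) \<and>
      (\<exists>x::nat \<Rightarrow> real. (\<forall>j\<in>S. x j \<ge> 0) \<and> (\<forall>i<d. v i = (\<Sum>j\<in>S. of_int (A i j) * x j)))}"

definition pointed_cone :: "(nat \<Rightarrow> real) set \<Rightarrow> bool" where
  "pointed_cone C \<longleftrightarrow> (\<forall>v. v \<in> C \<and> (\<lambda>i. - v i) \<in> C \<longrightarrow> (\<forall>i. v i = 0))"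

definition pos_kernel_trivial :: "nat \<Rightarrow> nat \<Rightarrow> (nat \<Rightarrow> nat \<Rightarrow> int) \<Rightarrow> bool" where
  "pos_kernel_trivial d n A \<longleftrightarrow>
     (\<forall>x::nat \<Rightarrow> real. (\<forall>j<n. x j \<ge> 0) \<and> (\<forall>i<d. (\<Sum>j<n. of_int (A i j) * x j) = 0)
        \<longrightarrow> (\<forall>j<n. x j = 0))"

definition generates_lattice :: "nat \<Rightarrow> nat \<Rightarrow> (nat \<Rightarrow> nat \<Rightarrow> int) \<Rightarrow> bool" where
  "generates_lattice d n A \<longleftrightarrow>
     (\<forall>b::nat \<Rightarrow> int. \<exists>x::nat \<Rightarrow> int. \<forall>i<d. (\<Sum>j<n. A i j * x j) = b i)"

definition in_NA :: "nat \<Rightarrow> nat \<Rightarrow> (nat \<Rightarrow> nat \<Rightarrow> int) \<Rightarrow> (nat \<Rightarrow> int) \<Rightarrow> bool" where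
  "in_NA d n A b \<longleftrightarrow> (\<exists>u::nat \<Rightarrow> nat. \<forall>i<d. b i = (\<Sum>j<n. A i j * int (u j)))"

definition regular_subdivision ::
    "nat \<Rightarrow> nat \<Rightarrow> (nat \<Rightarrow> nat \<Rightarrow> int) \<Rightarrow> (nat \<Rightarrow> int) \<Rightarrow> nat set set" where
  "regular_subdivision d n A c = {\<sigma>. \<sigma> \<subseteq> {0..<n} \<and>
     (\<exists>y::nat \<Rightarrow> real. \<forall>j<n.
        (j \<in> \<sigma> \<longrightarrow> (\<Sum>i<d. y i * of_int (A i j)) = of_int (c j)) \<and>
        (j \<notin> \<sigma> \<longrightarrow> (\<Sum>i<d. y i * of_int (A i j)) < of_int (c j)))}"

text \<open>c is generic: Delta_c is a triangulation of cone(A), i.e. the cones of its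
  faces cover cone(A) and every face is simplicial (its columns are linearly
  independent).\<close>
definition generic_cost :: "nat \<Rightarrow> nat \<Rightarrow> (nat \<Rightarrow> nat \<Rightarrow> int) \<Rightarrow> (nat \<Rightarrow> int) \<Rightarrow> bool" where
  "generic_cost d n A c \<longleftrightarrow>
     (\<forall>\<sigma>\<in>regular_subdivision d n A c. \<forall>w::nat \<Rightarrow> real.
        (\<forall>i<d. (\<Sum>j\<in>\<sigma>. w j * of_int (A i j)) = 0) \<longrightarrow> (\<forall>j\<in>\<sigma>. w j = 0)) \<and>
     cone_of d A {0..<n} = (\<Union>\<sigma>\<in>regular_subdivision d n A c. cone_of d A \<sigma>)"

definition kernel_lattice_basis ::
    "nat \<Rightarrow> nat \<Rightarrow> (nat \<Rightarrow> nat \<Rightarrow> int) \<Rightarrow> (nat \<Rightarrow> nat \<Rightarrow> int) \<Rightarrow> bool" where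
  "kernel_lattice_basis d n A B \<longleftrightarrow>
     (\<forall>k<n-d. \<forall>i<d. (\<Sum>j<n. A i j * B j k) = 0) \<and>
     (\<forall>x::nat \<Rightarrow> int. (\<forall>i<d. (\<Sum>j<n. A i j * x j) = 0) \<longrightarrow>
        (\<exists>!z::nat \<Rightarrow> int. (\<forall>k\<ge>n-d. z k = 0) \<and> (\<forall>j<n. x j = (\<Sum>k<n-d. B j k * z k))))"

definition gr_feasible ::
    "nat \<Rightarrow> nat \<Rightarrow> (nat \<Rightarrow> nat \<Rightarrow> int) \<Rightarrow> nat set \<Rightarrow> (nat \<Rightarrow> nat) \<Rightarrow> (nat \<Rightarrow> int) \<Rightarrow> bool" where
  "gr_feasible d n B \<tau> u z \<longleftrightarrow> (\<forall>k\<ge>n-d. z k = 0) \<and>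
     (\<forall>j<n. j \<notin> \<tau> \<longrightarrow> (\<Sum>k<n-d. B j k * z k) \<le> int (u j))"

definition gr_objective ::
    "nat \<Rightarrow> nat \<Rightarrow> (nat \<Rightarrow> int) \<Rightarrow> (nat \<Rightarrow> nat \<Rightarrow> int) \<Rightarrow> (nat \<Rightarrow> int) \<Rightarrow> int" where
  "gr_objective d n c B z = (\<Sum>k<n-d. - (\<Sum>j<n. c j * B j k) * z k)"

definition gr_has_finite_optimum ::
    "nat \<Rightarrow> nat \<Rightarrow> (nat \<Rightarrow> int) \<Rightarrow> (nat \<Rightarrow> nat \<Rightarrow> int) \<Rightarrow> nat set \<Rightarrow> (nat \<Rightarrow> nat) \<Rightarrow> bool" where
  "gr_has_finite_optimum d n c B \<tau> u \<longleftrightarrow>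
     (\<exists>z. gr_feasible d n B \<tau> u z \<and>
        (\<forall>z'. gr_feasible d n B \<tau> u z' \<longrightarrow> gr_objective d n c B z \<le> gr_objective d n c B z'))"

end

theory Submission
  imports Defs
begin
lemma fredholm_rat:
  fixes M :: "nat \<Rightarrow> nat \<Rightarrow> real" and v :: "nat \<Rightarrow> real"
  assumes "finite J" "finite I" "\<forall>i\<in>I. \<forall>j\<in>J. M i j \<in> \<rat>" "\<forall>i\<in>I. v i \<in> \<rat>"
  shows "(\<exists>l. (\<forall>j\<in>J. l j \<in> \<rat>) \<and> (\<forall>i\<in>I. (\<Sum>j\<in>J. M i j * l j) = v i)) \<or>
         (\<exists>y. (\<forall>j\<in>J. (\<Sum>i\<in>I. y i * M i j) = 0) \<and> (\<Sum>i\<in>I. y i * v i) \<noteq> 0)"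
  using assms
proof (induction J arbitrary: M v rule: finite_induct)
  case empty
  show ?case
  proof (cases "\<forall>i\<in>I. v i = 0")
    case True
    then show ?thesis by auto
  next
    case False
    then obtain i0 where i0: "i0 \<in> I" "v i0 \<noteq> 0" by auto
    have "(\<Sum>i\<in>I. (if i = i0 then 1 else 0) * v i) = v i0"
    proof -
      have "(\<Sum>i\<in>I. (if i = i0 then 1 else 0) * v i) = (\<Sum>i\<in>I. if i = i0 then v i else 0)"
        by (intro sum.cong) auto
      then show ?thesis using i0 \<open>finite I\<close> by simp
    qed
    then show ?thesis using i0 by (intro disjI2 exI[of _ "\<lambda>i. if i = i0 then 1 else 0"]) auto
  qed
next
  case (insert k J)
  show ?case
  proof (cases "\<forall>i\<in>I. M i k = 0")
    case True
    from insert.IH[of M v] insert.prems have "(\<exists>l. (\<forall>j\<in>J. l j \<in> \<rat>) \<and> (\<forall>i\<in>I. (\<Sum>j\<in>J. M i j * l j) = v i)) \<or>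
         (\<exists>y. (\<forall>j\<in>J. (\<Sum>i\<in>I. y i * M i j) = 0) \<and> (\<Sum>i\<in>I. y i * v i) \<noteq> 0)" by auto
    then show ?thesis
    proof
      assume "\<exists>l. (\<forall>j\<in>J. l j \<in> \<rat>) \<and> (\<forall>i\<in>I. (\<Sum>j\<in>J. M i j * l j) = v i)"
      then obtain l where l: "\<forall>j\<in>J. l j \<in> \<rat>" "\<forall>i\<in>I. (\<Sum>j\<in>J. M i j * l j) = v i" by blast
      have "\<forall>i\<in>I. (\<Sum>j\<in>insert k J. M i j * (l(k:=0)) j) = v i"
      proof
        fix i assume "i \<in> I"
        have "(\<Sum>j\<in>J. M i j * (l(k:=0)) j) = (\<Sum>j\<in>J. M i j * l j)"
          using insert.hyps by (intro sum.cong) auto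
        then show "(\<Sum>j\<in>insert k J. M i j * (l(k:=0)) j) = v i"
          using insert.hyps l \<open>i \<in> I\<close> by simp
      qed
      moreover have "\<forall>j\<in>insert k J. (l(k:=0)) j \<in> \<rat>" using l by auto
      ultimately show ?thesis by blast
    next
      assume "\<exists>y. (\<forall>j\<in>J. (\<Sum>i\<in>I. y i * M i j) = 0) \<and> (\<Sum>i\<in>I. y i * v i) \<noteq> 0"
      then show ?thesis using True by auto
    qed
  next
    case False
    then obtain e where e: "e \<in> I" "M e k \<noteq> 0" by auto
    define M' where "M' i j = M i j - (M i k / M e k) * M e j" for i j
    define v' where "v' i = v i - (M i k / M e k) * v e" for i
    have "\<forall>i\<in>I. \<forall>j\<in>J. M' i j \<in> \<rat>" using insert.prems e unfolding M'_def
      by (auto intro!: Rats_diff Rats_mult Rats_divide)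
    moreover have "\<forall>i\<in>I. v' i \<in> \<rat>" using insert.prems e unfolding v'_def
      by (auto intro!: Rats_diff Rats_mult Rats_divide)
    ultimately have "(\<exists>l. (\<forall>j\<in>J. l j \<in> \<rat>) \<and> (\<forall>i\<in>I. (\<Sum>j\<in>J. M' i j * l j) = v' i)) \<or>
         (\<exists>y. (\<forall>j\<in>J. (\<Sum>i\<in>I. y i * M' i j) = 0) \<and> (\<Sum>i\<in>I. y i * v' i) \<noteq> 0)"
      using insert.IH[of M' v'] insert.prems by auto
    then show ?thesis
    proof
      assume "\<exists>l. (\<forall>j\<in>J. l j \<in> \<rat>) \<and> (\<forall>i\<in>I. (\<Sum>j\<in>J. M' i j * l j) = v' i)"
      then obtain l where l: "\<forall>j\<in>J. l j \<in> \<rat>" "\<forall>i\<in>I. (\<Sum>j\<in>J. M' i j * l j) = v' i" by blast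
      define lk where "lk = (v e - (\<Sum>j\<in>J. M e j * l j)) / M e k"
      have "\<forall>i\<in>I. (\<Sum>j\<in>insert k J. M i j * (l(k:=lk)) j) = v i"
      proof
        fix i assume i: "i \<in> I"
        have "(\<Sum>j\<in>J. M i j * (l(k:=lk)) j) = (\<Sum>j\<in>J. M i j * l j)"
          using insert.hyps by (intro sum.cong) auto
        moreover have "(\<Sum>j\<in>J. M' i j * l j) = (\<Sum>j\<in>J. M i j * l j) - (M i k / M e k) * (\<Sum>j\<in>J. M e j * l j)"
          unfolding M'_def by (simp add: algebra_simps sum_subtractf sum_distrib_left)
        moreover have "(\<Sum>j\<in>insert k J. M i j * (l(k:=lk)) j) = M i k * lk + (\<Sum>j\<in>J. M i j * (l(k:=lk)) j)"
          using insert.hyps by simp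
        moreover have "(\<Sum>j\<in>J. M' i j * l j) = v i - (M i k / M e k) * v e"
          using l(2) i unfolding v'_def by simp
        moreover have "M i k * lk = (M i k / M e k) * (v e - (\<Sum>j\<in>J. M e j * l j))"
          unfolding lk_def by simp
        ultimately show "(\<Sum>j\<in>insert k J. M i j * (l(k:=lk)) j) = v i"
          by (simp add: algebra_simps)
      qed
      moreover have "\<forall>j\<in>insert k J. (l(k:=lk)) j \<in> \<rat>" using l insert.prems e unfolding lk_def
        by (auto intro!: Rats_diff Rats_mult Rats_divide Rats_sum)
      ultimately show ?thesis by blast
    next
      assume "\<exists>y. (\<forall>j\<in>J. (\<Sum>i\<in>I. y i * M' i j) = 0) \<and> (\<Sum>i\<in>I. y i * v' i) \<noteq> 0"
      then obtain y where y: "\<forall>j\<in>J. (\<Sum>i\<in>I. y i * M' i j) = 0" "(\<Sum>i\<in>I. y i * v' i) \<noteq> 0" by blast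
      define s where "s = (\<Sum>i\<in>I. y i * M i k) / M e k"
      define y' where "y' i = y i - (if i = e then s else 0)" for i
      have key: "(\<Sum>i\<in>I. y' i * w i) = (\<Sum>i\<in>I. y i * w i) - s * w e" for w
      proof -
        have "(\<Sum>i\<in>I. y' i * w i) = (\<Sum>i\<in>I. y i * w i) - (\<Sum>i\<in>I. (if i = e then s * w e else 0))"
        proof -
          have "(\<Sum>i\<in>I. y' i * w i) = (\<Sum>i\<in>I. y i * w i - (if i = e then s * w e else 0))"
            unfolding y'_def by (intro sum.cong) (auto simp: algebra_simps)
          then show ?thesis by (simp add: sum_subtractf)
        qed
        also have "\<dots> = (\<Sum>i\<in>I. y i * w i) - s * w e" using e \<open>finite I\<close> by simp
        finally show ?thesis .
      qed
      have "\<forall>j\<in>insert k J. (\<Sum>i\<in>I. y' i * M i j) = 0"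
      proof
        fix j assume j: "j \<in> insert k J"
        show "(\<Sum>i\<in>I. y' i * M i j) = 0"
        proof (cases "j = k")
          case True
          then show ?thesis using key[of "\<lambda>i. M i k"] e unfolding s_def by simp
        next
          case False
          then have "j \<in> J" using j by auto
          have "(\<Sum>i\<in>I. y i * M' i j) = (\<Sum>i\<in>I. y i * M i j) - s * M e j"
            unfolding M'_def s_def by (simp add: algebra_simps sum_subtractf sum_distrib_left sum_divide_distrib)
          then show ?thesis using key[of "\<lambda>i. M i j"] y(1) \<open>j \<in> J\<close> by simp
        qed
      qed
      moreover have "(\<Sum>i\<in>I. y' i * v i) \<noteq> 0"
      proof -
        have "(\<Sum>i\<in>I. y i * v' i) = (\<Sum>i\<in>I. y i * v i) - s * v e"
          unfolding v'_def s_def by (simp add: algebra_simps sum_subtractf sum_distrib_left sum_divide_distrib)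
        then show ?thesis using key[of v] y(2) by simp
      qed
      ultimately show ?thesis by blast
    qed
  qed
qed


lemma common_denom:
  fixes f :: "nat \<Rightarrow> real"
  assumes "finite S" "\<forall>j\<in>S. f j \<in> \<rat>"
  shows "\<exists>N::nat. N > 0 \<and> (\<forall>j\<in>S. real N * f j \<in> \<int>)"
  using assms
proof (induction S rule: finite_induct)
  case empty
  show ?case by (intro exI[of _ 1]) auto
next
  case (insert k S)
  then obtain N where N: "N > 0" "\<forall>j\<in>S. real N * f j \<in> \<int>" by auto
  from insert.prems have "f k \<in> \<rat>" by auto
  then obtain a b where ab: "b > 0" "f k = of_int a / of_int b" by (rule Rats_cases')
  define N' where "N' = N * nat b"
  have "N' > 0" using N ab unfolding N'_def by simp
  moreover have "\<forall>j\<in>insert k S. real N' * f j \<in> \<int>"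
  proof
    fix j assume "j \<in> insert k S"
    then show "real N' * f j \<in> \<int>"
    proof
      assume "j = k"
      have "real N' * f j = real N * of_int a"
        using ab \<open>j = k\<close> unfolding N'_def by (simp add: of_nat_nat)
      then show ?thesis by simp
    next
      assume "j \<in> S"
      have "real N' = of_int b * real N"
        using ab unfolding N'_def by (simp add: of_nat_nat)
      then have "real N' * f j = of_int b * (real N * f j)" by (simp only: mult.assoc)
      moreover have "real N * f j \<in> \<int>" using N(2) \<open>j \<in> S\<close> by blast
      ultimately show ?thesis by (metis Ints_mult Ints_of_int)
    qed
  qed
  ultimately show ?case by blast
qed

lemma sum_swap_helper:
  fixes f :: "nat \<Rightarrow> int"
  shows "(\<Sum>j<n. f j * (\<Sum>k<m. B j k * z k)) = (\<Sum>k<m. (\<Sum>j<n. f j * B j k) * z k)"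
  by (simp add: sum_distrib_left sum_distrib_right mult.assoc sum.swap[of _ "{..<n}"])

lemma subdiv_subset:
  assumes gen: "generic_cost d n A c" and sig: "\<sigma> \<in> regular_subdivision d n A c" and sub: "\<tau> \<subseteq> \<sigma>"
  shows "\<tau> \<in> regular_subdivision d n A c"
proof -
  have sn: "\<sigma> \<subseteq> {0..<n}" using sig by (simp add: regular_subdivision_def)
  have "\<exists>y0::nat\<Rightarrow>real. \<forall>j<n.
        (j \<in> \<sigma> \<longrightarrow> (\<Sum>i<d. y0 i * of_int (A i j)) = of_int (c j)) \<and>
        (j \<notin> \<sigma> \<longrightarrow> (\<Sum>i<d. y0 i * of_int (A i j)) < of_int (c j))"
    using sig by (simp add: regular_subdivision_def)
  then obtain y0 :: "nat\<Rightarrow>real" where y0: "\<forall>j<n.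
        (j \<in> \<sigma> \<longrightarrow> (\<Sum>i<d. y0 i * of_int (A i j)) = of_int (c j)) \<and>
        (j \<notin> \<sigma> \<longrightarrow> (\<Sum>i<d. y0 i * of_int (A i j)) < of_int (c j))" by blast
  have indep: "\<And>w::nat\<Rightarrow>real. (\<forall>i<d. (\<Sum>j\<in>\<sigma>. w j * of_int (A i j)) = 0) \<Longrightarrow> (\<forall>j\<in>\<sigma>. w j = 0)"
    using gen sig unfolding generic_cost_def by blast
  have fs: "finite \<sigma>" using sn finite_subset by blast
  define vv :: "nat \<Rightarrow> real" where "vv j = (if j \<in> \<tau> then 0 else -1)" for j
  have "(\<exists>l. (\<forall>j\<in>{..<d}. l j \<in> \<rat>) \<and> (\<forall>i\<in>\<sigma>. (\<Sum>j\<in>{..<d}. (\<lambda>a b. of_int (A b a)) i j * l j) = vv i)) \<or>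
         (\<exists>y. (\<forall>j\<in>{..<d}. (\<Sum>i\<in>\<sigma>. y i * (\<lambda>a b. of_int (A b a)) i j) = 0) \<and> (\<Sum>i\<in>\<sigma>. y i * vv i) \<noteq> 0)"
    by (rule fredholm_rat) (auto simp: fs vv_def)
  moreover have "\<not> (\<exists>y. (\<forall>j\<in>{..<d}. (\<Sum>i\<in>\<sigma>. y i * (\<lambda>a b. real_of_int (A b a)) i j) = 0) \<and> (\<Sum>i\<in>\<sigma>. y i * vv i) \<noteq> 0)"
  proof
    assume "\<exists>y. (\<forall>j\<in>{..<d}. (\<Sum>i\<in>\<sigma>. y i * (\<lambda>a b. real_of_int (A b a)) i j) = 0) \<and> (\<Sum>i\<in>\<sigma>. y i * vv i) \<noteq> 0"
    then obtain y where "\<forall>i<d. (\<Sum>j\<in>\<sigma>. y j * of_int (A i j)) = 0" "(\<Sum>i\<in>\<sigma>. y i * vv i) \<noteq> 0" by auto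
    with indep[of y] show False by simp
  qed
  ultimately obtain w where w: "\<forall>j\<in>\<sigma>. (\<Sum>i<d. of_int (A i j) * w i) = vv j" by auto
  define a where "a j = (\<Sum>i<d. w i * of_int (A i j))" for j
  define g where "g j = of_int (c j) - (\<Sum>i<d. y0 i * of_int (A i j))" for j
  define S where "S = insert 1 ((\<lambda>j. g j / (\<bar>a j\<bar> + 1)) ` {j. j < n \<and> j \<notin> \<sigma>})"
  define \<epsilon> where "\<epsilon> = Min S"
  have finS: "finite S" unfolding S_def by auto
  have "\<forall>x\<in>S. x > 0" unfolding S_def using y0 by (auto simp: g_def intro!: divide_pos_pos)
  then have epos: "\<epsilon> > 0" unfolding \<epsilon>_def using finS by (simp add: S_def)
  have ele: "\<epsilon> \<le> g j / (\<bar>a j\<bar> + 1)" if "j < n" "j \<notin> \<sigma>" for j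
    unfolding \<epsilon>_def using finS that by (intro Min_le) (auto simp: S_def)
  define y1 where "y1 i = y0 i + \<epsilon> * w i" for i
  have y1eq: "(\<Sum>i<d. y1 i * of_int (A i j)) = (\<Sum>i<d. y0 i * of_int (A i j)) + \<epsilon> * a j" for j
    unfolding y1_def a_def by (simp add: algebra_simps sum.distrib sum_distrib_left)
  have aeq: "a j = vv j" if "j \<in> \<sigma>" for j
    using w that unfolding a_def by (simp add: mult.commute)
  have "\<forall>j<n. (j \<in> \<tau> \<longrightarrow> (\<Sum>i<d. y1 i * of_int (A i j)) = of_int (c j)) \<and>
        (j \<notin> \<tau> \<longrightarrow> (\<Sum>i<d. y1 i * of_int (A i j)) < of_int (c j))"
  proof (intro allI impI conjI)
    fix j assume "j < n" "j \<in> \<tau>"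
    then show "(\<Sum>i<d. y1 i * of_int (A i j)) = of_int (c j)"
      using y1eq[of j] aeq[of j] sub y0 by (auto simp: vv_def)
  next
    fix j assume j: "j < n" "j \<notin> \<tau>"
    show "(\<Sum>i<d. y1 i * of_int (A i j)) < of_int (c j)"
    proof (cases "j \<in> \<sigma>")
      case True
      then show ?thesis using y1eq[of j] aeq[of j] j y0 epos by (auto simp: vv_def)
    next
      case False
      have gpos: "g j > 0" using y0 j False by (auto simp: g_def)
      have "\<epsilon> * (\<bar>a j\<bar> + 1) \<le> g j"
        using ele[OF j(1) False] by (simp add: pos_le_divide_eq add_pos_nonneg)
      moreover have "\<epsilon> * a j < \<epsilon> * (\<bar>a j\<bar> + 1)" using epos by (intro mult_strict_left_mono) auto
      ultimately show ?thesis using y1eq[of j] by (simp add: g_def)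
    qed
  qed
  then show ?thesis using sub sn unfolding regular_subdivision_def by blast
qed


lemma easy_dir:
  assumes ker: "kernel_lattice_basis d n A B"
    and tau: "\<tau> \<in> regular_subdivision d n A c"
  shows "gr_has_finite_optimum d n c B \<tau> u"
proof -
  have "\<exists>y::nat\<Rightarrow>real. \<forall>j<n.
        (j \<in> \<tau> \<longrightarrow> (\<Sum>i<d. y i * of_int (A i j)) = of_int (c j)) \<and>
        (j \<notin> \<tau> \<longrightarrow> (\<Sum>i<d. y i * of_int (A i j)) < of_int (c j))"
    using tau by (simp add: regular_subdivision_def)
  then obtain y :: "nat\<Rightarrow>real" where y: "\<forall>j<n.
        (j \<in> \<tau> \<longrightarrow> (\<Sum>i<d. y i * of_int (A i j)) = of_int (c j)) \<and>
        (j \<notin> \<tau> \<longrightarrow> (\<Sum>i<d. y i * of_int (A i j)) < of_int (c j))" by blast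
  define s where "s j = (\<Sum>i<d. y i * of_int (A i j))" for j
  have kz: "\<forall>k<n-d. \<forall>i<d. (\<Sum>j<n. A i j * B j k) = 0" using ker unfolding kernel_lattice_basis_def by blast
  define L where "L = - (\<Sum>j<n. (of_int (c j) - s j) * real (u j))"
  have bound: "L \<le> of_int (gr_objective d n c B z)" if fz: "gr_feasible d n B \<tau> u z" for z
  proof -
    define x where "x j = (\<Sum>k<n-d. B j k * z k)" for j
    have obj: "gr_objective d n c B z = - (\<Sum>j<n. c j * x j)"
      unfolding gr_objective_def x_def sum_swap_helper by (simp add: sum_negf)
    have Ax: "(\<Sum>j<n. A i j * x j) = 0" if "i < d" for i
      unfolding x_def sum_swap_helper using kz that by simp
    have "(\<Sum>j<n. s j * of_int (x j)) = (\<Sum>i<d. y i * of_int (\<Sum>j<n. A i j * x j))"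
      unfolding s_def by (simp add: sum_distrib_left sum_distrib_right mult.assoc sum.swap[of _ "{..<n}"])
    also have "\<dots> = 0" using Ax by simp
    finally have s0: "(\<Sum>j<n. s j * of_int (x j)) = 0" .
    have "(\<Sum>j<n. (of_int (c j) - s j) * of_int (x j)) \<le> (\<Sum>j<n. (of_int (c j) - s j) * real (u j))"
    proof (rule sum_mono)
      fix j assume "j \<in> {..<n}"
      then have j: "j < n" by simp
      show "(of_int (c j) - s j) * of_int (x j) \<le> (of_int (c j) - s j) * real (u j)"
      proof (cases "j \<in> \<tau>")
        case True then show ?thesis using y j by (simp add: s_def)
      next
        case False
        have "x j \<le> int (u j)" using fz j False unfolding gr_feasible_def x_def by blast
        then have "real_of_int (x j) \<le> real (u j)" by linarith
        moreover have "of_int (c j) - s j \<ge> 0" using y j False by (simp add: s_def less_imp_le)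
        ultimately show ?thesis by (intro mult_left_mono)
      qed
    qed
    moreover have "(\<Sum>j<n. (of_int (c j) - s j) * of_int (x j)) = (\<Sum>j<n. of_int (c j) * of_int (x j)) - (\<Sum>j<n. s j * of_int (x j))"
      by (simp add: algebra_simps sum_subtractf)
    moreover have "of_int (gr_objective d n c B z) = - (\<Sum>j<n. of_int (c j) * of_int (x j) :: real)"
      unfolding obj by simp
    ultimately show ?thesis unfolding L_def using s0 by linarith
  qed
  have f0: "gr_feasible d n B \<tau> u (\<lambda>_. 0)" unfolding gr_feasible_def by simp
  obtain z where z: "gr_feasible d n B \<tau> u z"
     and zmin: "\<forall>z'. gr_feasible d n B \<tau> u z' \<longrightarrow> nat (gr_objective d n c B z - \<lfloor>L\<rfloor>) \<le> nat (gr_objective d n c B z' - \<lfloor>L\<rfloor>)"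
    using ex_has_least_nat[of "gr_feasible d n B \<tau> u" "\<lambda>_. 0" "\<lambda>z. nat (gr_objective d n c B z - \<lfloor>L\<rfloor>)", OF f0] by blast
  have ge: "\<lfloor>L\<rfloor> \<le> gr_objective d n c B z'" if "gr_feasible d n B \<tau> u z'" for z'
    using bound[OF that] of_int_floor_le[of L] by linarith
  show ?thesis unfolding gr_has_finite_optimum_def
  proof (intro exI conjI allI impI)
    show "gr_feasible d n B \<tau> u z" by (fact z)
    fix z' assume "gr_feasible d n B \<tau> u z'"
    then show "gr_objective d n c B z \<le> gr_objective d n c B z'"
    proof -
      have h: "nat (gr_objective d n c B z - \<lfloor>L\<rfloor>) \<le> nat (gr_objective d n c B z' - \<lfloor>L\<rfloor>)"
        using zmin \<open>gr_feasible d n B \<tau> u z'\<close> by blast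
      have "0 \<le> gr_objective d n c B z' - \<lfloor>L\<rfloor>" using ge[OF \<open>gr_feasible d n B \<tau> u z'\<close>] by simp
      then have "gr_objective d n c B z - \<lfloor>L\<rfloor> \<le> gr_objective d n c B z' - \<lfloor>L\<rfloor>"
        using h nat_le_eq_zle by blast
      then show ?thesis by simp
    qed
  qed
qed


lemma hard_dir:
  assumes gen: "generic_cost d n A c"
    and ker: "kernel_lattice_basis d n A B"
    and tsub: "\<tau> \<subseteq> {0..<n}"
    and opt: "gr_has_finite_optimum d n c B \<tau> u"
  shows "\<tau> \<in> regular_subdivision d n A c"
proof (rule ccontr)
  assume ntau: "\<tau> \<notin> regular_subdivision d n A c"
  have ftau: "finite \<tau>" using tsub finite_subset by blast
  define v :: "nat \<Rightarrow> real" where "v i = (\<Sum>j\<in>\<tau>. of_int (A i j))" for i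
  define vv :: "nat \<Rightarrow> real" where "vv i = (if i < d then v i else 0)" for i
  have sum_tau: "(\<Sum>j\<in>{0..<n}. (if j \<in> \<tau> then f j else 0)) = (\<Sum>j\<in>\<tau>. f j)" for f :: "nat \<Rightarrow> 'b::comm_monoid_add"
  proof -
    have "(\<Sum>j\<in>{0..<n}. (if j \<in> \<tau> then f j else 0)) = (\<Sum>j\<in>{0..<n} \<inter> \<tau>. f j)"
      by (simp add: sum.inter_restrict)
    also have "{0..<n} \<inter> \<tau> = \<tau>" using tsub by blast
    finally show ?thesis .
  qed
  have "vv \<in> cone_of d A {0..<n}"
    unfolding cone_of_def
  proof (intro CollectI conjI exI[of _ "\<lambda>j. if j \<in> \<tau> then 1 else 0"])
    show "\<forall>i\<ge>d. vv i = 0" by (simp add: vv_def)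
    show "\<forall>j\<in>{0..<n}. 0 \<le> (if j \<in> \<tau> then 1 else (0::real))" by simp
    show "\<forall>i<d. vv i = (\<Sum>j\<in>{0..<n}. of_int (A i j) * (if j \<in> \<tau> then 1 else 0))"
    proof (intro allI impI)
      fix i assume "i < d"
      have "(\<Sum>j\<in>{0..<n}. of_int (A i j) * (if j \<in> \<tau> then 1 else 0)) = (\<Sum>j\<in>{0..<n}. (if j \<in> \<tau> then real_of_int (A i j) else 0))"
        by (intro sum.cong) auto
      then show "vv i = (\<Sum>j\<in>{0..<n}. of_int (A i j) * (if j \<in> \<tau> then 1 else 0))"
        using \<open>i < d\<close> sum_tau[of "\<lambda>j. real_of_int (A i j)"] by (simp add: vv_def v_def)
    qed
  qed
  then obtain \<sigma> where sig: "\<sigma> \<in> regular_subdivision d n A c" and vs: "vv \<in> cone_of d A \<sigma>"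
    using gen unfolding generic_cost_def by blast
  have sn: "\<sigma> \<subseteq> {0..<n}" using sig by (simp add: regular_subdivision_def)
  have fs: "finite \<sigma>" using sn finite_subset by blast
  have "\<exists>y0::nat\<Rightarrow>real. \<forall>j<n.
        (j \<in> \<sigma> \<longrightarrow> (\<Sum>i<d. y0 i * of_int (A i j)) = of_int (c j)) \<and>
        (j \<notin> \<sigma> \<longrightarrow> (\<Sum>i<d. y0 i * of_int (A i j)) < of_int (c j))"
    using sig by (simp add: regular_subdivision_def)
  then obtain y0 :: "nat\<Rightarrow>real" where y0: "\<forall>j<n.
        (j \<in> \<sigma> \<longrightarrow> (\<Sum>i<d. y0 i * of_int (A i j)) = of_int (c j)) \<and>
        (j \<notin> \<sigma> \<longrightarrow> (\<Sum>i<d. y0 i * of_int (A i j)) < of_int (c j))" by blast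
  have indep: "\<And>w::nat\<Rightarrow>real. (\<forall>i<d. (\<Sum>j\<in>\<sigma>. w j * of_int (A i j)) = 0) \<Longrightarrow> (\<forall>j\<in>\<sigma>. w j = 0)"
    using gen sig unfolding generic_cost_def by blast
  obtain x :: "nat \<Rightarrow> real" where xpos: "\<forall>j\<in>\<sigma>. x j \<ge> 0" and xv: "\<forall>i<d. vv i = (\<Sum>j\<in>\<sigma>. of_int (A i j) * x j)"
    using vs unfolding cone_of_def by blast
  have xv': "v i = (\<Sum>j\<in>\<sigma>. of_int (A i j) * x j)" if "i < d" for i
    using xv that by (simp add: vv_def)
  have "(\<exists>l. (\<forall>j\<in>\<sigma>. l j \<in> \<rat>) \<and> (\<forall>i\<in>{..<d}. (\<Sum>j\<in>\<sigma>. (\<lambda>a b. real_of_int (A a b)) i j * l j) = v i)) \<or>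
         (\<exists>y. (\<forall>j\<in>\<sigma>. (\<Sum>i\<in>{..<d}. y i * (\<lambda>a b. real_of_int (A a b)) i j) = 0) \<and> (\<Sum>i\<in>{..<d}. y i * v i) \<noteq> 0)"
    by (rule fredholm_rat) (auto simp: fs v_def intro!: Rats_sum)
  moreover have "\<not> (\<exists>y. (\<forall>j\<in>\<sigma>. (\<Sum>i\<in>{..<d}. y i * (\<lambda>a b. real_of_int (A a b)) i j) = 0) \<and> (\<Sum>i\<in>{..<d}. y i * v i) \<noteq> 0)"
  proof
    assume "\<exists>y. (\<forall>j\<in>\<sigma>. (\<Sum>i\<in>{..<d}. y i * (\<lambda>a b. real_of_int (A a b)) i j) = 0) \<and> (\<Sum>i\<in>{..<d}. y i * v i) \<noteq> 0"
    then obtain y where y1: "\<forall>j\<in>\<sigma>. (\<Sum>i<d. y i * real_of_int (A i j)) = 0" and y2: "(\<Sum>i<d. y i * v i) \<noteq> 0" by auto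
    have "(\<Sum>i<d. y i * v i) = (\<Sum>i<d. y i * (\<Sum>j\<in>\<sigma>. of_int (A i j) * x j))"
      using xv' by simp
    also have "\<dots> = (\<Sum>j\<in>\<sigma>. (\<Sum>i<d. y i * real_of_int (A i j)) * x j)"
      by (simp add: sum_distrib_left sum_distrib_right mult.assoc sum.swap[of _ "{..<d}"])
    also have "\<dots> = 0" using y1 by simp
    finally show False using y2 by simp
  qed
  ultimately obtain l where lrat: "\<forall>j\<in>\<sigma>. l j \<in> \<rat>" and lv: "\<forall>i<d. (\<Sum>j\<in>\<sigma>. of_int (A i j) * l j) = v i"
    by auto
  have "\<forall>j\<in>\<sigma>. (l j - x j) = 0"
  proof (rule indep, intro allI impI)
    fix i assume "i < d"
    have "(\<Sum>j\<in>\<sigma>. (l j - x j) * of_int (A i j)) = (\<Sum>j\<in>\<sigma>. of_int (A i j) * l j) - (\<Sum>j\<in>\<sigma>. of_int (A i j) * x j)"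
      by (simp add: algebra_simps sum_subtractf)
    then show "(\<Sum>j\<in>\<sigma>. (l j - x j) * of_int (A i j)) = 0" using lv xv' \<open>i < d\<close> by simp
  qed
  then have lpos: "\<forall>j\<in>\<sigma>. l j \<ge> 0" using xpos by auto
  have "\<not> \<tau> \<subseteq> \<sigma>" using subdiv_subset[OF gen sig] ntau by blast
  then obtain t where t: "t \<in> \<tau>" "t \<notin> \<sigma>" by blast
  have tn: "t < n" using t tsub by auto
  define s where "s j = (\<Sum>i<d. y0 i * of_int (A i j))" for j
  define X :: "nat \<Rightarrow> real" where "X j = (if j \<in> \<tau> then 1 else 0) - (if j \<in> \<sigma> then l j else 0)" for j
  have sum_sig: "(\<Sum>j\<in>{0..<n}. (if j \<in> \<sigma> then f j else 0)) = (\<Sum>j\<in>\<sigma>. f j)" for f :: "nat \<Rightarrow> 'b::comm_monoid_add"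
  proof -
    have "(\<Sum>j\<in>{0..<n}. (if j \<in> \<sigma> then f j else 0)) = (\<Sum>j\<in>{0..<n} \<inter> \<sigma>. f j)"
      by (simp add: sum.inter_restrict)
    also have "{0..<n} \<inter> \<sigma> = \<sigma>" using sn by blast
    finally show ?thesis .
  qed
  have splitX: "(\<Sum>j<n. f j * X j) = (\<Sum>j\<in>\<tau>. f j) - (\<Sum>j\<in>\<sigma>. f j * l j)" for f
  proof -
    have "(\<Sum>j<n. f j * X j) = (\<Sum>j\<in>{0..<n}. (if j \<in> \<tau> then f j else 0)) - (\<Sum>j\<in>{0..<n}. (if j \<in> \<sigma> then f j * l j else 0))"
      unfolding atLeast0LessThan[symmetric] sum_subtractf[symmetric] by (intro sum.cong) (auto simp: X_def right_diff_distrib)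
    then show ?thesis using sum_tau[of f] sum_sig[of "\<lambda>j. f j * l j"] by simp
  qed
  have AX: "(\<Sum>j<n. of_int (A i j) * X j) = 0" if "i < d" for i
    using splitX[of "\<lambda>j. of_int (A i j)"] lv that by (simp add: v_def)
  have cX: "(\<Sum>j<n. of_int (c j) * X j) > 0"
  proof -
    have "(\<Sum>j\<in>\<sigma>. of_int (c j) * l j) = (\<Sum>j\<in>\<sigma>. s j * l j)"
      using y0 sn by (intro sum.cong) (auto simp: s_def)
    also have "\<dots> = (\<Sum>i<d. y0 i * (\<Sum>j\<in>\<sigma>. of_int (A i j) * l j))"
      unfolding s_def by (simp add: sum_distrib_left sum_distrib_right mult.assoc sum.swap[of _ "{..<d}"] mult.left_commute)
    also have "\<dots> = (\<Sum>i<d. y0 i * v i)" using lv by simp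
    also have "\<dots> = (\<Sum>j\<in>\<tau>. s j)"
      unfolding s_def v_def by (simp add: sum_distrib_left sum.swap[of _ "{..<d}"])
    finally have e1: "(\<Sum>j\<in>\<sigma>. of_int (c j) * l j) = (\<Sum>j\<in>\<tau>. s j)" .
    have e2: "(\<Sum>j<n. of_int (c j) * X j) = (\<Sum>j\<in>\<tau>. of_int (c j) - s j)"
      using splitX[of "\<lambda>j. of_int (c j)"] e1 by (simp add: sum_subtractf)
    have nn: "\<forall>j\<in>\<tau>. of_int (c j) - s j \<ge> 0"
    proof
      fix j assume "j \<in> \<tau>"
      then have "j < n" using tsub by auto
      then show "of_int (c j) - s j \<ge> 0" using y0 by (cases "j \<in> \<sigma>") (auto simp: s_def less_imp_le)
    qed
    have "of_int (c t) - s t \<le> (\<Sum>j\<in>\<tau>. of_int (c j) - s j)"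
      using member_le_sum[of t \<tau> "\<lambda>j. of_int (c j) - s j"] nn t ftau by blast
    moreover have "of_int (c t) - s t > 0" using y0 tn t by (simp add: s_def)
    ultimately show ?thesis using e2 by linarith
  qed
  obtain N :: nat where Npos: "N > 0" and NZ: "\<forall>j\<in>\<sigma>. real N * l j \<in> \<int>"
    using common_denom[OF fs lrat] by blast
  have NXZ: "real N * X j \<in> \<int>" for j
  proof -
    have "real N * X j = (if j \<in> \<tau> then real N else 0) - (if j \<in> \<sigma> then real N * l j else 0)"
      unfolding X_def by (simp add: algebra_simps)
    then show ?thesis using NZ by (auto intro!: Ints_diff)
  qed
  define Xi where "Xi j = \<lfloor>real N * X j\<rfloor>" for j
  have Xi: "of_int (Xi j) = real N * X j" for j
    using NXZ[of j] unfolding Xi_def by (metis Ints_cases floor_of_int)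
  have AXi: "(\<Sum>j<n. A i j * Xi j) = 0" if "i < d" for i
  proof -
    have "real_of_int (\<Sum>j<n. A i j * Xi j) = real N * (\<Sum>j<n. of_int (A i j) * X j)"
      by (simp add: Xi sum_distrib_left algebra_simps)
    then have "real_of_int (\<Sum>j<n. A i j * Xi j) = 0" using AX[OF that] by simp
    then show ?thesis by (rule iffD1[OF of_int_eq_0_iff])
  qed
  have cXi: "(\<Sum>j<n. c j * Xi j) \<ge> 1"
  proof -
    have "real_of_int (\<Sum>j<n. c j * Xi j) = real N * (\<Sum>j<n. of_int (c j) * X j)"
      by (simp add: Xi sum_distrib_left algebra_simps)
    moreover have "real N * (\<Sum>j<n. of_int (c j) * X j) > 0" using Npos cX by simp
    ultimately have "real_of_int (\<Sum>j<n. c j * Xi j) > 0" by simp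
    then have "(\<Sum>j<n. c j * Xi j) > 0" by (rule iffD1[OF of_int_0_less_iff])
    then show ?thesis by simp
  qed
  have Xneg: "Xi j \<le> 0" if "j \<notin> \<tau>" for j
  proof -
    have "X j \<le> 0" unfolding X_def using that lpos by auto
    then have "real_of_int (Xi j) \<le> 0" using Xi[of j] by (simp add: mult_nonneg_nonpos)
    then show ?thesis by simp
  qed
  obtain r where r0: "\<forall>k\<ge>n-d. r k = 0" and rX: "\<forall>j<n. Xi j = (\<Sum>k<n-d. B j k * r k)"
    using ker AXi unfolding kernel_lattice_basis_def by blast
  have feas: "gr_feasible d n B \<tau> u (\<lambda>k. int m * r k)" for m
    unfolding gr_feasible_def
  proof (intro conjI allI impI)
    fix k assume "n - d \<le> k" then show "int m * r k = 0" using r0 by simp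
  next
    fix j assume j: "j < n" "j \<notin> \<tau>"
    have "(\<Sum>k<n-d. B j k * (int m * r k)) = int m * Xi j"
      using rX j by (simp add: sum_distrib_left algebra_simps)
    also have "\<dots> \<le> 0" using Xneg[OF j(2)] by (simp add: mult_nonneg_nonpos)
    finally show "(\<Sum>k<n-d. B j k * (int m * r k)) \<le> int (u j)" by simp
  qed
  have objm: "gr_objective d n c B (\<lambda>k. int m * r k) = - (int m * (\<Sum>j<n. c j * Xi j))" for m
  proof -
    have "(\<Sum>j<n. c j * Xi j) = (\<Sum>k<n-d. (\<Sum>j<n. c j * B j k) * r k)"
      using rX by (simp add: sum_swap_helper)
    then show ?thesis unfolding gr_objective_def
      by (simp add: sum_distrib_left sum_negf algebra_simps)
  qed
  from opt obtain z where z: "gr_feasible d n B \<tau> u z"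
    and zmin: "\<forall>z'. gr_feasible d n B \<tau> u z' \<longrightarrow> gr_objective d n c B z \<le> gr_objective d n c B z'"
    unfolding gr_has_finite_optimum_def by blast
  define m where "m = nat \<bar>gr_objective d n c B z\<bar> + 1"
  have "gr_objective d n c B z \<le> - (int m * (\<Sum>j<n. c j * Xi j))"
  proof -
    have "gr_objective d n c B z \<le> gr_objective d n c B (\<lambda>k. int m * r k)"
      using zmin feas[of m] by blast
    then show ?thesis unfolding objm[of m] .
  qed
  moreover have "int m * (\<Sum>j<n. c j * Xi j) \<ge> int m"
    using cXi by (simp add: mult_le_cancel_left1)
  ultimately show False unfolding m_def by linarith
qed

theorem theorem2p7:
  fixes d n :: nat
    and A B :: "nat \<Rightarrow> nat \<Rightarrow> int"
    and c b :: "nat \<Rightarrow> int"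
    and u :: "nat \<Rightarrow> nat"
    and \<tau> :: "nat set"
  assumes "full_row_rank d n A"
    and "pointed_cone (cone_of d A {0..<n})"
    and "pos_kernel_trivial d n A"
    and "generates_lattice d n A"
    and "generic_cost d n A c"
    and "kernel_lattice_basis d n A B"
    and "in_NA d n A b"
    and "\<forall>i<d. (\<Sum>j<n. A i j * int (u j)) = b i"
    and "\<tau> \<subseteq> {0..<n}"
  shows "gr_has_finite_optimum d n c B \<tau> u \<longleftrightarrow> \<tau> \<in> regular_subdivision d n A c"
  using hard_dir[OF assms(5) assms(6) assms(9)] easy_dir[OF assms(6)] by blast

end
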